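(* Let $k,l,m,n\in\mathbb{N}$ with $n,k\ge 2$ and $m,l\ge 3$. Then among the four ordered graphs $M_n$, $K_m$, $M^{RL}_k$, $M^{+}_l$, none is an induced ordered subgraph of another one of them. Moreover $\chi(M_n)=n+1$, $\chi(K_m)=m$, $\chi(M^{RL}_k)=2k$ and $\chi(M^{+}_l)=2l$.
   Context: An ordered graph is a triple $G=(V,E,\le_G)$ where $(V,E)$ is a finite simple undirected graph and $\le_G$ is a linear order on $V$. $H$ is an induced ordered subgraph of $G$ if there is an injective order-preserving map $V(H)\to V(G)$ such that two vertices are adjacent in $H$ iff their images are adjacent in $G$. $K_m$ is the complete graph on $m$ linearly ordered vertices. The ordered matching $M_n$ has vertices $a_1<b_1<\dots<a_n<b_n$ and edges $\{a_i,b_i\}$. $M^{RL}_n$ is $M_n$ together with all edges $\{b_i,a_j\}$, $i<j$; $M^{LR}_n$ is $M_n$ together with all edges $\{a_i,b_j\}$, $i<j$; $M^{+}_n=M^{LR}_n\cup M^{RL}_n$. The ordered chromatic number $\chi(G)$ is the minimum number of sets in a partition of $V$ into sets consecutive in $\le_G$ spanning no edge. *)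

theory Defs
  imports Main
begin

text \<open>An ordered graph is represented with vertex set {0..<nv G}, linearly ordered by the
natural order on nat, and a symmetric irreflexive adjacency predicate adj G (only its
values on vertices matter).\<close>

record ograph =
  nv :: nat
  adj :: "nat \<Rightarrow> nat \<Rightarrow> bool"

definition sym_edge :: "(nat \<Rightarrow> nat \<Rightarrow> bool) \<Rightarrow> nat \<Rightarrow> nat \<Rightarrow> bool" where
  "sym_edge P u v \<longleftrightarrow> u \<noteq> v \<and> P (min u v) (max u v)"

definition induced_osub :: "ograph \<Rightarrow> ograph \<Rightarrow> bool" where
  "induced_osub H G \<longleftrightarrow> (\<exists>f. strict_mono_on {..<nv H} f \<and> f ` {..<nv H} \<subseteq> {..<nv G} \<and>
     (\<forall>i<nv H. \<forall>j<nv H. adj H i j \<longleftrightarrow> adj G (f i) (f j)))"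

definition K :: "nat \<Rightarrow> ograph" where
  "K m = \<lparr>nv = m, adj = sym_edge (\<lambda>x y. y < m)\<rparr>"

text \<open>Matchings: a_i = 2i, b_i = 2i+1 for i = 0..n-1 (so a_0<b_0<a_1<...<b_{n-1}).\<close>
definition M :: "nat \<Rightarrow> ograph" where
  "M n = \<lparr>nv = 2*n, adj = sym_edge (\<lambda>x y. y < 2*n \<and> x div 2 = y div 2)\<rparr>"

text \<open>M^RL: M_n plus all edges {b_i, a_j}, i<j.\<close>
definition MRL :: "nat \<Rightarrow> ograph" where
  "MRL n = \<lparr>nv = 2*n, adj = sym_edge (\<lambda>x y. y < 2*n \<and>
      (x div 2 = y div 2 \<or> (odd x \<and> even y \<and> x div 2 < y div 2)))\<rparr>"

text \<open>M^LR: M_n plus all edges {a_i, b_j}, i<j.\<close>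
definition MLR :: "nat \<Rightarrow> ograph" where
  "MLR n = \<lparr>nv = 2*n, adj = sym_edge (\<lambda>x y. y < 2*n \<and>
      (x div 2 = y div 2 \<or> (even x \<and> odd y \<and> x div 2 < y div 2)))\<rparr>"

definition Mplus :: "nat \<Rightarrow> ograph" where
  "Mplus n = \<lparr>nv = 2*n, adj = (\<lambda>u v. adj (MLR n) u v \<or> adj (MRL n) u v)\<rparr>"

definition interval_colouring :: "ograph \<Rightarrow> nat set set \<Rightarrow> bool" where
  "interval_colouring G P \<longleftrightarrow>
     \<Union>P = {..<nv G} \<and> (\<forall>S\<in>P. S \<noteq> {}) \<and>
     (\<forall>S\<in>P. \<forall>T\<in>P. S \<noteq> T \<longrightarrow> S \<inter> T = {}) \<and>
     (\<forall>S\<in>P. \<forall>x\<in>S. \<forall>z\<in>S. \<forall>y. x \<le> y \<and> y \<le> z \<longrightarrow> y \<in> S) \<and>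
     (\<forall>S\<in>P. \<forall>x\<in>S. \<forall>y\<in>S. \<not> adj G x y)"

definition ochi :: "ograph \<Rightarrow> nat" where
  "ochi G = (LEAST c. \<exists>P. interval_colouring G P \<and> card P = c)"

end

theory Submission
  imports Defs
begin

lemma nv_simps[simp]: "nv (M n) = 2*n" "nv (K m) = m" "nv (MRL n) = 2*n" "nv (Mplus n) = 2*n"
  by (simp_all add: M_def K_def MRL_def Mplus_def)

lemma adj_M: "u < v \<Longrightarrow> adj (M n) u v \<longleftrightarrow> v < 2*n \<and> u div 2 = v div 2"
  by (simp add: M_def sym_edge_def)
lemma adj_K: "u < v \<Longrightarrow> adj (K m) u v \<longleftrightarrow> v < m"
  by (simp add: K_def sym_edge_def)
lemma adj_MRL: "u < v \<Longrightarrow> adj (MRL n) u v \<longleftrightarrow> v < 2*n \<and> (u div 2 = v div 2 \<or> odd u \<and> even v \<and> u div 2 < v div 2)"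
  by (simp add: MRL_def sym_edge_def)
lemma div_eq_next: "(x::nat) div 2 = y div 2 \<Longrightarrow> x < y \<Longrightarrow> y = x + 1 \<and> even x"
  by presburger

lemma par_aux: "(u::nat) < v \<Longrightarrow> (u div 2 = v div 2 \<or> even u \<and> odd v \<and> u div 2 < v div 2 \<or> odd u \<and> even v \<and> u div 2 < v div 2) \<longleftrightarrow> (odd u \<noteq> odd v)"
proof -
  assume uv: "u < v"
  have le: "u div 2 \<le> v div 2" using uv by (simp add: div_le_mono)
  show ?thesis
  proof
    assume "u div 2 = v div 2 \<or> even u \<and> odd v \<and> u div 2 < v div 2 \<or> odd u \<and> even v \<and> u div 2 < v div 2"
    then show "odd u \<noteq> odd v" using div_eq_next[OF _ uv] by auto
  next
    assume "odd u \<noteq> odd v"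
    then show "u div 2 = v div 2 \<or> even u \<and> odd v \<and> u div 2 < v div 2 \<or> odd u \<and> even v \<and> u div 2 < v div 2"
      using le by auto
  qed
qed

lemma adj_Mplus: "u < v \<Longrightarrow> adj (Mplus n) u v \<longleftrightarrow> v < 2*n \<and> (odd u \<noteq> odd v)"
proof -
  assume uv: "u < v"
  have "adj (Mplus n) u v \<longleftrightarrow> v < 2*n \<and> (u div 2 = v div 2 \<or> even u \<and> odd v \<and> u div 2 < v div 2 \<or> odd u \<and> even v \<and> u div 2 < v div 2)"
    using uv unfolding Mplus_def MRL_def MLR_def sym_edge_def by auto
  then show ?thesis using par_aux[OF uv] by simp
qed

lemma irr: "\<not> adj (M n) u u" "\<not> adj (K n) u u" "\<not> adj (MRL n) u u" "\<not> adj (Mplus n) u u"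
  by (simp_all add: M_def K_def MRL_def Mplus_def MLR_def sym_edge_def)

lemma osubE:
  assumes "induced_osub H G"
  obtains f where "\<And>i j. i < j \<Longrightarrow> j < nv H \<Longrightarrow> f i < f j" "\<And>i. i < nv H \<Longrightarrow> f i < nv G"
    "\<And>i j. i < nv H \<Longrightarrow> j < nv H \<Longrightarrow> adj H i j \<longleftrightarrow> adj G (f i) (f j)"
proof -
  from assms obtain f where a: "strict_mono_on {..<nv H} f" "f ` {..<nv H} \<subseteq> {..<nv G}"
     "\<forall>i<nv H. \<forall>j<nv H. adj H i j \<longleftrightarrow> adj G (f i) (f j)" unfolding induced_osub_def by blast
  show ?thesis
  proof (rule that)
    show "\<And>i j. i < j \<Longrightarrow> j < nv H \<Longrightarrow> f i < f j" using a(1) unfolding strict_mono_on_def by simp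
    show "\<And>i. i < nv H \<Longrightarrow> f i < nv G" using a(2) by auto
    show "\<And>i j. i < nv H \<Longrightarrow> j < nv H \<Longrightarrow> adj H i j \<longleftrightarrow> adj G (f i) (f j)" using a(3) by blast
  qed
qed

lemma lower:
  assumes P: "interval_colouring G P" and C: "C \<subseteq> {..<nv G}"
    and c: "\<And>c. c \<in> C \<Longrightarrow> c = 0 \<or> adj G (c - 1) c"
  shows "card C \<le> card P"
proof -
  have U: "\<Union>P = {..<nv G}" and cv: "\<And>S x z y. S\<in>P \<Longrightarrow> x\<in>S \<Longrightarrow> z\<in>S \<Longrightarrow> x \<le> y \<Longrightarrow> y \<le> z \<Longrightarrow> y \<in> S"
    and ef: "\<And>S x y. S\<in>P \<Longrightarrow> x\<in>S \<Longrightarrow> y\<in>S \<Longrightarrow> \<not> adj G x y"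
    and dj: "\<And>S T. S\<in>P \<Longrightarrow> T\<in>P \<Longrightarrow> S \<noteq> T \<Longrightarrow> S \<inter> T = {}"
    using P unfolding interval_colouring_def by (simp, meson, meson, meson)
  have fin: "finite P" using U by (metis finite_UnionD finite_lessThan)
  define g where "g c = (SOME S. S \<in> P \<and> c \<in> S)" for c
  have g: "g c \<in> P \<and> c \<in> g c" if "c \<in> C" for c
  proof -
    have "\<exists>S. S \<in> P \<and> c \<in> S" using that C U by blast
    then show ?thesis unfolding g_def by (rule someI_ex)
  qed
  have key: "False" if "c \<in> C" "d \<in> C" "c < d" "g c = g d" for c d
  proof -
    have "adj G (d - 1) d" using c[OF that(2)] that(3) by auto
    moreover have "d - 1 \<in> g d" using cv[of "g d" c d "d - 1"] g[OF that(1)] g[OF that(2)] that(3,4) by auto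
    ultimately show False using ef[of "g d" "d - 1" d] g[OF that(2)] by auto
  qed
  have "inj_on g C"
  proof (rule inj_onI)
    fix c d assume "c \<in> C" "d \<in> C" "g c = g d"
    then show "c = d" using key[of c d] key[of d c] by (cases "c < d"; cases "d < c") auto
  qed
  moreover have "g ` C \<subseteq> P" using g by auto
  ultimately show ?thesis using fin by (simp add: card_inj_on_le)
qed

lemma ochi_eq:
  assumes "interval_colouring G P0" "card P0 = c"
    "\<And>P. interval_colouring G P \<Longrightarrow> c \<le> card P"
  shows "ochi G = c"
  unfolding ochi_def
  by (rule Least_equality) (use assms in auto)

lemma singletons:
  assumes "\<And>u. \<not> adj G u u"
  shows "interval_colouring G ((\<lambda>i. {i}) ` {..<nv G})" "card ((\<lambda>i. {i}) ` {..<nv G}) = nv G"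
  using assms unfolding interval_colouring_def by (auto simp: card_image)


lemma notin_K:
  assumes "2 < nv H" "\<not> adj H 0 2" shows "\<not> induced_osub H (K m)"
proof
  assume "induced_osub H (K m)"
  then obtain f where mono: "\<And>i j. i < j \<Longrightarrow> j < nv H \<Longrightarrow> f i < f j" and rng: "\<And>i. i < nv H \<Longrightarrow> f i < nv (K m)"
    and ad: "\<And>i j. i < nv H \<Longrightarrow> j < nv H \<Longrightarrow> adj H i j \<longleftrightarrow> adj (K m) (f i) (f j)" by (rule osubE) blast
  have "f 0 < f 2" using mono assms by auto
  moreover have "f 2 < m" using rng assms by auto
  ultimately have "adj (K m) (f 0) (f 2)" by (simp add: adj_K)
  then show False using ad[of 0 2] assms by auto
qed

lemma K_notin:
  assumes "m \<ge> 3" "\<And>u v. u < v \<Longrightarrow> adj G u v \<Longrightarrow> odd u \<noteq> odd v" shows "\<not> induced_osub (K m) G"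
proof
  assume "induced_osub (K m) G"
  then obtain f where mono: "\<And>i j. i < j \<Longrightarrow> j < nv (K m) \<Longrightarrow> f i < f j" and rng: "\<And>i. i < nv (K m) \<Longrightarrow> f i < nv G"
    and ad: "\<And>i j. i < nv (K m) \<Longrightarrow> j < nv (K m) \<Longrightarrow> adj (K m) i j \<longleftrightarrow> adj G (f i) (f j)" by (rule osubE) blast
  have m: "f 0 < f 1" "f 1 < f 2" "f 0 < f 2" using mono assms by auto
  have "adj G (f 0) (f 1)" "adj G (f 1) (f 2)" "adj G (f 0) (f 2)"
    using ad[of 0 1] ad[of 1 2] ad[of 0 2] assms by (auto simp: adj_K)
  then have "odd (f 0) \<noteq> odd (f 1)" "odd (f 1) \<noteq> odd (f 2)" "odd (f 0) \<noteq> odd (f 2)"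
    using assms(2) m by blast+
  then show False by blast
qed




lemma notin_M:
  assumes "2 < nv H" "adj H 0 1" "adj H 1 2" shows "\<not> induced_osub H (M n)"
proof
  assume "induced_osub H (M n)"
  then obtain f where mono: "\<And>i j. i < j \<Longrightarrow> j < nv H \<Longrightarrow> f i < f j" and rng: "\<And>i. i < nv H \<Longrightarrow> f i < nv (M n)"
    and ad: "\<And>i j. i < nv H \<Longrightarrow> j < nv H \<Longrightarrow> adj H i j \<longleftrightarrow> adj (M n) (f i) (f j)" by (rule osubE) blast
  have m: "f 0 < f 1" "f 1 < f 2" using mono assms by auto
  have "adj (M n) (f 0) (f 1)" "adj (M n) (f 1) (f 2)"
    using ad[of 0 1] ad[of 1 2] assms by auto
  then have "f 0 div 2 = f 1 div 2" "f 1 div 2 = f 2 div 2" using m by (auto simp: adj_M)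
  then have "f 1 = f 0 + 1 \<and> even (f 0)" "f 2 = f 1 + 1 \<and> even (f 1)" using m div_eq_next by blast+
  then show False by auto
qed

lemma bip_M: "u < v \<Longrightarrow> adj (M n) u v \<Longrightarrow> odd u \<noteq> odd v"
  using div_eq_next by (auto simp add: adj_M)
lemma bip_MRL: "u < v \<Longrightarrow> adj (MRL n) u v \<Longrightarrow> odd u \<noteq> odd v"
  using div_eq_next by (auto simp add: adj_MRL)
lemma bip_Mplus: "u < v \<Longrightarrow> adj (Mplus n) u v \<Longrightarrow> odd u \<noteq> odd v"
  by (simp add: adj_Mplus)
lemma MRL_oe: "u < v \<Longrightarrow> v < 2*k \<Longrightarrow> odd u \<Longrightarrow> even v \<Longrightarrow> adj (MRL k) u v"
  by (simp add: adj_MRL) presburger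
lemma MRL_eo: "u < v \<Longrightarrow> adj (MRL k) u v \<Longrightarrow> even u \<Longrightarrow> v = u + 1"
  using div_eq_next by (auto simp add: adj_MRL)


lemma M_notin_MRL:
  assumes "n \<ge> 2" shows "\<not> induced_osub (M n) (MRL k)"
proof
  assume "induced_osub (M n) (MRL k)"
  then obtain f where mono: "\<And>i j. i < j \<Longrightarrow> j < nv (M n) \<Longrightarrow> f i < f j" and rng: "\<And>i. i < nv (M n) \<Longrightarrow> f i < nv (MRL k)"
    and ad: "\<And>i j. i < nv (M n) \<Longrightarrow> j < nv (M n) \<Longrightarrow> adj (M n) i j \<longleftrightarrow> adj (MRL k) (f i) (f j)" by (rule osubE) blast
  have m: "f 0 < f 1" "f 1 < f 2" "f 2 < f 3" "f 0 < f 2" "f 0 < f 3" "f 1 < f 3" using mono assms by auto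
  have r: "f 2 < 2 * k" "f 3 < 2 * k" using rng assms by auto
  have a: "adj (MRL k) (f 0) (f 1)" "adj (MRL k) (f 2) (f 3)" "\<not> adj (MRL k) (f 1) (f 2)"
    "\<not> adj (MRL k) (f 0) (f 2)" "\<not> adj (MRL k) (f 0) (f 3)" "\<not> adj (MRL k) (f 1) (f 3)"
    using ad[of 0 1] ad[of 2 3] ad[of 1 2] ad[of 0 2] ad[of 0 3] ad[of 1 3] assms by (auto simp: adj_M)
  have p: "odd (f 0) \<noteq> odd (f 1)" using bip_MRL a(1) m(1) by blast
  have o2: "odd (f 2)"
  proof (rule ccontr)
    assume e: "\<not> odd (f 2)"
    show False
    proof (cases "odd (f 0)")
      case True then show False using MRL_oe[OF m(4) r(1)] e a(4) by blast
    next
      case False then show False using p MRL_oe[OF m(2) r(1)] e a(3) by blast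
    qed
  qed
  have o3: "odd (f 3)"
  proof (rule ccontr)
    assume e: "\<not> odd (f 3)"
    show False
    proof (cases "odd (f 0)")
      case True then show False using MRL_oe[OF m(5) r(2)] e a(5) by blast
    next
      case False then show False using p MRL_oe[OF m(6) r(2)] e a(6) by blast
    qed
  qed
  show False using bip_MRL[OF m(3) a(2)] o2 o3 by blast
qed

lemma M_notin_Mplus:
  assumes "n \<ge> 2" shows "\<not> induced_osub (M n) (Mplus k)"
proof
  assume "induced_osub (M n) (Mplus k)"
  then obtain f where mono: "\<And>i j. i < j \<Longrightarrow> j < nv (M n) \<Longrightarrow> f i < f j" and rng: "\<And>i. i < nv (M n) \<Longrightarrow> f i < nv (Mplus k)"
    and ad: "\<And>i j. i < nv (M n) \<Longrightarrow> j < nv (M n) \<Longrightarrow> adj (M n) i j \<longleftrightarrow> adj (Mplus k) (f i) (f j)" by (rule osubE) blast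
  have m: "f 0 < f 1" "f 1 < f 2" "f 0 < f 2" "f 2 < 2 * k" using mono rng assms by auto
  have "adj (Mplus k) (f 0) (f 1)" "\<not> adj (Mplus k) (f 1) (f 2)" "\<not> adj (Mplus k) (f 0) (f 2)"
    using ad[of 0 1] ad[of 1 2] ad[of 0 2] assms by (auto simp: adj_M)
  then show False using m by (auto simp: adj_Mplus)
qed

lemma MRL_notin_Mplus:
  assumes "n \<ge> 2" shows "\<not> induced_osub (MRL n) (Mplus k)"
proof
  assume "induced_osub (MRL n) (Mplus k)"
  then obtain f where mono: "\<And>i j. i < j \<Longrightarrow> j < nv (MRL n) \<Longrightarrow> f i < f j" and rng: "\<And>i. i < nv (MRL n) \<Longrightarrow> f i < nv (Mplus k)"
    and ad: "\<And>i j. i < nv (MRL n) \<Longrightarrow> j < nv (MRL n) \<Longrightarrow> adj (MRL n) i j \<longleftrightarrow> adj (Mplus k) (f i) (f j)" by (rule osubE) blast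
  have m: "f 0 < f 1" "f 1 < f 2" "f 2 < f 3" "f 0 < f 3" "f 3 < 2 * k" using mono rng assms by auto
  have "adj (Mplus k) (f 0) (f 1)" "adj (Mplus k) (f 1) (f 2)" "adj (Mplus k) (f 2) (f 3)" "\<not> adj (Mplus k) (f 0) (f 3)"
    using ad[of 0 1] ad[of 1 2] ad[of 2 3] ad[of 0 3] assms by (auto simp: adj_MRL)
  then show False using m by (auto simp: adj_Mplus)
qed

lemma Mplus_notin_MRL:
  assumes "l \<ge> 3" shows "\<not> induced_osub (Mplus l) (MRL k)"
proof
  assume "induced_osub (Mplus l) (MRL k)"
  then obtain f where mono: "\<And>i j. i < j \<Longrightarrow> j < nv (Mplus l) \<Longrightarrow> f i < f j" and rng: "\<And>i. i < nv (Mplus l) \<Longrightarrow> f i < nv (MRL k)"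
    and ad: "\<And>i j. i < nv (Mplus l) \<Longrightarrow> j < nv (Mplus l) \<Longrightarrow> adj (Mplus l) i j \<longleftrightarrow> adj (MRL k) (f i) (f j)" by (rule osubE) blast
  have m: "f 0 < f 1" "f 1 < f 2" "f 0 < f 3" "f 0 < f 5" "f 1 < f 4" "f 3 < f 5" "f 2 < f 4" using mono assms by auto
  have a: "adj (MRL k) (f 0) (f 1)" "adj (MRL k) (f 1) (f 2)" "adj (MRL k) (f 0) (f 3)" "adj (MRL k) (f 0) (f 5)" "adj (MRL k) (f 1) (f 4)"
    using ad[of 0 1] ad[of 1 2] ad[of 0 3] ad[of 0 5] ad[of 1 4] assms by (auto simp: adj_Mplus)
  have "odd (f 0) \<noteq> odd (f 1)" using bip_MRL a m by blast
  then show False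
  proof (cases "odd (f 0)")
    case True
    then have "even (f 1)" using \<open>odd (f 0) \<noteq> odd (f 1)\<close> by blast
    then have "f 2 = f 1 + 1" "f 4 = f 1 + 1" using MRL_eo a(2,5) m(2,5) by blast+
    then show False using m(7) by simp
  next
    case False
    then have "f 3 = f 0 + 1" "f 5 = f 0 + 1" using MRL_eo a(3,4) m(3,4) by blast+
    then show False using m(6) by simp
  qed
qed


lemma chi_K: "m \<ge> 1 \<Longrightarrow> ochi (K m) = m"
proof -
  have irr': "\<And>u. \<not> adj (K m) u u" by (rule irr)
  show ?thesis
  proof (rule ochi_eq[OF singletons(1)[OF irr'] ])
    show "card ((\<lambda>i. {i}) ` {..<nv (K m)}) = m" using singletons(2)[OF irr'] by simp
    fix P assume P: "interval_colouring (K m) P"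
    have "card {..<m} \<le> card P"
    proof (rule lower[OF P])
      fix c assume c: "c \<in> {..<m}"
      show "c = 0 \<or> adj (K m) (c - 1) c"
      proof (cases "c = 0")
        case False
        then have "c - 1 < c" by simp
        then show ?thesis using adj_K[OF \<open>c - 1 < c\<close>] c by simp
      qed simp
    qed simp
    then show "m \<le> card P" by simp
  qed
qed

lemma chi_MRL: "ochi (MRL k) = 2 * k"
proof -
  have irr': "\<And>u. \<not> adj (MRL k) u u" by (rule irr)
  show ?thesis
  proof (rule ochi_eq[OF singletons(1)[OF irr'] ])
    show "card ((\<lambda>i. {i}) ` {..<nv (MRL k)}) = 2 * k" using singletons(2)[OF irr'] by simp
    fix P assume P: "interval_colouring (MRL k) P"
    have "card {..<2*k} \<le> card P"
    proof (rule lower[OF P])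
      fix c assume c: "c \<in> {..<2*k}"
      show "c = 0 \<or> adj (MRL k) (c - 1) c"
      proof (cases "c = 0")
        case False
        then have "c - 1 < c" by simp
        moreover have "c < 2 * k" using c by simp
        ultimately show ?thesis unfolding adj_MRL[OF \<open>c - 1 < c\<close>] using False by presburger
      qed simp
    qed simp
    then show "2 * k \<le> card P" by simp
  qed
qed

lemma chi_Mplus: "ochi (Mplus k) = 2 * k"
proof -
  have irr': "\<And>u. \<not> adj (Mplus k) u u" by (rule irr)
  show ?thesis
  proof (rule ochi_eq[OF singletons(1)[OF irr'] ])
    show "card ((\<lambda>i. {i}) ` {..<nv (Mplus k)}) = 2 * k" using singletons(2)[OF irr'] by simp
    fix P assume P: "interval_colouring (Mplus k) P"
    have "card {..<2*k} \<le> card P"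
    proof (rule lower[OF P])
      fix c assume c: "c \<in> {..<2*k}"
      show "c = 0 \<or> adj (Mplus k) (c - 1) c"
      proof (cases "c = 0")
        case False
        then have "c - 1 < c" by simp
        moreover have "c < 2 * k" using c by simp
        ultimately show ?thesis unfolding adj_Mplus[OF \<open>c - 1 < c\<close>] using False by presburger
      qed simp
    qed simp
    then show "2 * k \<le> card P" by simp
  qed
qed

lemma div_both1: "(x::nat) div 2 = y div 2 \<Longrightarrow> (x+1) div 2 = (y+1) div 2 \<Longrightarrow> x < y \<Longrightarrow> False"
proof -
  assume a: "x div 2 = y div 2" "(x+1) div 2 = (y+1) div 2" "x < y"
  then have "y = x + 1" "even x" using div_eq_next by blast+
  then show False using a(2) by auto
qed
lemma div_both: "(x::nat) div 2 = y div 2 \<Longrightarrow> (x+1) div 2 = (y+1) div 2 \<Longrightarrow> x = y"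
  using div_both1[of x y] div_both1[of y x] by (cases "x < y"; cases "y < x") auto

lemma chi_M: assumes n1: "n \<ge> 1" shows "ochi (M n) = n + 1"
proof -
  define B where "B j = {x. x < 2*n \<and> (x + 1) div 2 = j}" for j
  define P0 where "P0 = B ` {..n}"
  have ne: "B j \<noteq> {}" if "j \<le> n" for j
  proof (cases "j = 0")
    case True then have "0 \<in> B j" using that n1 unfolding B_def by auto
    then show ?thesis by blast
  next
    case False then have "2 * j - 1 \<in> B j" using that unfolding B_def by auto
    then show ?thesis by blast
  qed
  have inj: "inj_on B {..n}"
  proof (rule inj_onI)
    fix i j assume "i \<in> {..n}" "j \<in> {..n}" "B i = B j"
    then obtain x where "x \<in> B i" "x \<in> B j" using ne by (metis atMost_iff equals0I)
    then show "i = j" unfolding B_def by auto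
  qed
  have col: "interval_colouring (M n) P0"
    unfolding interval_colouring_def P0_def
  proof (intro conjI ballI allI impI)
    show "\<Union> (B ` {..n}) = {..<nv (M n)}" unfolding B_def by auto
  next
    fix S assume "S \<in> B ` {..n}" then show "S \<noteq> {}" using ne by auto
  next
    fix S T assume "S \<in> B ` {..n}" "T \<in> B ` {..n}" "S \<noteq> T"
    then show "S \<inter> T = {}" unfolding B_def by auto
  next
    fix S x z y assume "S \<in> B ` {..n}" "x \<in> S" "z \<in> S" "x \<le> y \<and> y \<le> z"
    then obtain j where "S = B j" by auto
    then have "x < 2*n" "(x+1) div 2 = j" "z < 2 * n" "(z+1) div 2 = j" using \<open>x \<in> S\<close> \<open>z \<in> S\<close> unfolding B_def by auto
    moreover have "(x+1) div 2 \<le> (y+1) div 2" "(y+1) div 2 \<le> (z+1) div 2"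
      using \<open>x \<le> y \<and> y \<le> z\<close> by (simp_all add: div_le_mono)
    ultimately show "y \<in> S" using \<open>S = B j\<close> \<open>x \<le> y \<and> y \<le> z\<close> unfolding B_def by auto
  next
    fix S x y assume "S \<in> B ` {..n}" "x \<in> S" "y \<in> S"
    then obtain j where "S = B j" by auto
    then have "(x+1) div 2 = (y+1) div 2" using \<open>x \<in> S\<close> \<open>y \<in> S\<close> unfolding B_def by auto
    moreover have "adj (M n) x y \<Longrightarrow> x div 2 = y div 2 \<and> x \<noteq> y"
      unfolding M_def sym_edge_def by (cases "x \<le> y") (auto simp: min_def max_def)
    ultimately show "\<not> adj (M n) x y" using div_both by blast
  qed
  show ?thesis
  proof (rule ochi_eq[OF col])
    show "card P0 = n + 1" unfolding P0_def using card_image[OF inj] by simp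
    fix P assume P: "interval_colouring (M n) P"
    define C where "C = insert 0 ((\<lambda>i. 2*i+1) ` {..<n})"
    have "card C = n + 1"
    proof -
      have "card ((\<lambda>i. 2*i+1) ` {..<n}) = n" by (subst card_image) (auto simp: inj_on_def)
      moreover have "0 \<notin> (\<lambda>i. 2*i+1) ` {..<n}" by auto
      ultimately show ?thesis unfolding C_def by simp
    qed
    moreover have "card C \<le> card P"
    proof (rule lower[OF P])
      show "C \<subseteq> {..<nv (M n)}" unfolding C_def using n1 by auto
    next
      fix c assume "c \<in> C"
      then show "c = 0 \<or> adj (M n) (c - 1) c" unfolding C_def by (auto simp: adj_M)
    qed
    ultimately show "n + 1 \<le> card P" by simp
  qed
qed


theorem proposition2:
  fixes k l m n :: nat
  assumes "n \<ge> 2" "k \<ge> 2" "m \<ge> 3" "l \<ge> 3"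
  shows "(\<forall>i<4. \<forall>j<4. i \<noteq> j \<longrightarrow>
            \<not> induced_osub ([M n, K m, MRL k, Mplus l] ! i) ([M n, K m, MRL k, Mplus l] ! j))
       \<and> ochi (M n) = n + 1 \<and> ochi (K m) = m \<and> ochi (MRL k) = 2 * k \<and> ochi (Mplus l) = 2 * l"
proof -
  have f1: "\<not> induced_osub (M n) (K m)" by (rule notin_K) (use assms in \<open>auto simp: adj_M\<close>)
  have f2: "\<not> induced_osub (MRL k) (K m)" by (rule notin_K) (use assms in \<open>auto simp: adj_MRL\<close>)
  have f3: "\<not> induced_osub (Mplus l) (K m)" by (rule notin_K) (use assms in \<open>auto simp: adj_Mplus\<close>)
  have f4: "\<not> induced_osub (K m) (M n)" by (rule K_notin) (use assms bip_M in auto)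
  have f5: "\<not> induced_osub (K m) (MRL k)" by (rule K_notin) (use assms bip_MRL in auto)
  have f6: "\<not> induced_osub (K m) (Mplus l)" by (rule K_notin) (use assms bip_Mplus in auto)
  have f7: "\<not> induced_osub (M n) (MRL k)" by (rule M_notin_MRL) (use assms in auto)
  have f8: "\<not> induced_osub (M n) (Mplus l)" by (rule M_notin_Mplus) (use assms in auto)
  have f9: "\<not> induced_osub (MRL k) (M n)" by (rule notin_M) (use assms in \<open>auto simp: adj_MRL\<close>)
  have f10: "\<not> induced_osub (Mplus l) (M n)" by (rule notin_M) (use assms in \<open>auto simp: adj_Mplus\<close>)
  have f11: "\<not> induced_osub (MRL k) (Mplus l)" by (rule MRL_notin_Mplus) (use assms in auto)
  have f12: "\<not> induced_osub (Mplus l) (MRL k)" by (rule Mplus_notin_MRL) (use assms in auto)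
  have A: "\<forall>i<4. \<forall>j<4. i \<noteq> j \<longrightarrow>
            \<not> induced_osub ([M n, K m, MRL k, Mplus l] ! i) ([M n, K m, MRL k, Mplus l] ! j)"
  proof (intro allI impI)
    fix i j :: nat assume "i < 4" "j < 4" "i \<noteq> j"
    then have "i = 0 \<or> i = 1 \<or> i = 2 \<or> i = 3" "j = 0 \<or> j = 1 \<or> j = 2 \<or> j = 3" by auto
    then show "\<not> induced_osub ([M n, K m, MRL k, Mplus l] ! i) ([M n, K m, MRL k, Mplus l] ! j)"
      using \<open>i \<noteq> j\<close> f1 f2 f3 f4 f5 f6 f7 f8 f9 f10 f11 f12 by auto
  qed
  have "ochi (M n) = n + 1" by (rule chi_M) (use assms in auto)
  moreover have "ochi (K m) = m" by (rule chi_K) (use assms in auto)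
  ultimately show ?thesis using A chi_MRL chi_Mplus by simp
qed

end
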